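(* Let $B=F_{2,3}$ be the bowtie and let $\vec B$ be an orientation of $B$ such that either (a) all four edges incident to the center are directed into the center, or all four are directed out of the center; or (b) in one triangle both edges incident to the center are directed into the center, and in the other triangle both edges incident to the center are directed out of the center. Then for all sufficiently large $n$, $D(n,\vec B)>2^{\mathrm{ex}(n,B)}$.
   Context: The bowtie $B=F_{2,3}$ consists of two triangles sharing exactly one vertex, the center. For a directed graph $\vec H$, $D(n,\vec H)$ is the maximum, over all $n$-vertex graphs $G$, of the number of orientations of $G$ containing no copy of $\vec H$; $\mathrm{ex}(n,B)$ is the Turán number of $B$ (equal to $\lfloor n^2/4\rfloor+1$ for large $n$). *)

theory Defs
  imports Main
begin

definition all_edges :: "nat \<Rightarrow> nat set set" where
  "all_edges n = {{u, v} | u v. u < n \<and> v < n \<and> u \<noteq> v}"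

definition is_orientation :: "nat set set \<Rightarrow> (nat \<times> nat) set \<Rightarrow> bool" where
  "is_orientation G R \<longleftrightarrow>
     (\<forall>(u, v) \<in> R. {u, v} \<in> G) \<and>
     (\<forall>u v. {u, v} \<in> G \<longrightarrow> ((u, v) \<in> R \<longleftrightarrow> (v, u) \<notin> R))"

definition contains_dicopy :: "(nat \<times> nat) set \<Rightarrow> nat set \<Rightarrow> (nat \<times> nat) set \<Rightarrow> bool" where
  "contains_dicopy R VH H \<longleftrightarrow>
     (\<exists>f. inj_on f VH \<and> (\<forall>(a, b) \<in> H. (f a, f b) \<in> R))"

definition contains_copy :: "nat set set \<Rightarrow> nat set \<Rightarrow> nat set set \<Rightarrow> bool" where
  "contains_copy G VF F \<longleftrightarrow>
     (\<exists>f. inj_on f VF \<and> (\<forall>e \<in> F. f ` e \<in> G))"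

definition D :: "nat \<Rightarrow> nat set \<Rightarrow> (nat \<times> nat) set \<Rightarrow> nat" where
  "D n VH H = Max ((\<lambda>G. card {R. is_orientation G R \<and> \<not> contains_dicopy R VH H})
                    ` {G. G \<subseteq> all_edges n})"

definition ex :: "nat \<Rightarrow> nat set \<Rightarrow> nat set set \<Rightarrow> nat" where
  "ex n VF F = Max (card ` {G. G \<subseteq> all_edges n \<and> \<not> contains_copy G VF F})"

text \<open>The bowtie F_{2,3}: center 0, triangles {0,1,2} and {0,3,4}.\<close>
definition bowtie_vertices :: "nat set" where
  "bowtie_vertices = {0, 1, 2, 3, 4}"

definition bowtie :: "nat set set" where
  "bowtie = {{0,1}, {0,2}, {1,2}, {0,3}, {0,4}, {3,4}}"

end

theory Submission
  imports Defs
begin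


definition EV :: "nat set \<Rightarrow> nat set set" where
  "EV V = {{u,v}|u v. u \<in> V \<and> v \<in> V \<and> u \<noteq> v}"
definition nb :: "nat set set \<Rightarrow> nat \<Rightarrow> nat set" where
  "nb G v = {u. {u,v} \<in> G}"

lemma EV_mem: "{u,v} \<in> EV V \<longleftrightarrow> u \<in> V \<and> v \<in> V \<and> u \<noteq> v"
  unfolding EV_def by (auto simp: doubleton_eq_iff)

lemma EV_elem: "e \<in> EV V \<Longrightarrow> \<exists>u v. e = {u,v} \<and> u \<in> V \<and> v \<in> V \<and> u \<noteq> v"
  unfolding EV_def by auto

lemma EV_alt: "EV V = {A. A \<subseteq> V \<and> card A = 2}"
  unfolding EV_def by (auto simp: card_2_iff)

lemma finite_EV: "finite V \<Longrightarrow> finite (EV V)"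
  unfolding EV_alt by (rule finite_subset[of _ "Pow V"]) auto

lemma nb_sub: "G \<subseteq> EV V \<Longrightarrow> nb G v \<subseteq> V - {v}"
  unfolding nb_def using EV_mem by blast

lemma nb_sym: "u \<in> nb G v \<longleftrightarrow> v \<in> nb G u"
  unfolding nb_def by (simp add: insert_commute)

lemma bowtie_intro:
  assumes "distinct [c,x1,x2,y1,y2]"
    "{c,x1} \<in> G" "{c,x2} \<in> G" "{x1,x2} \<in> G" "{c,y1} \<in> G" "{c,y2} \<in> G" "{y1,y2} \<in> G"
  shows "contains_copy G bowtie_vertices bowtie"
proof -
  define f where "f = (\<lambda>i::nat. if i = 0 then c else if i = 1 then x1 else if i = 2 then x2
     else if i = 3 then y1 else y2)"
  have "inj_on f bowtie_vertices" using assms(1) unfolding inj_on_def f_def bowtie_vertices_def by auto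
  moreover have "\<forall>e \<in> bowtie. f ` e \<in> G" using assms unfolding bowtie_def f_def by (auto simp: insert_commute)
  ultimately show ?thesis unfolding contains_copy_def by blast
qed

lemma nb_mem: "G \<subseteq> EV V \<Longrightarrow> u \<in> nb G v \<Longrightarrow> u \<in> V \<and> v \<in> V \<and> u \<noteq> v"
  unfolding nb_def using EV_mem by blast

lemma avoid3: "card (A::nat set) \<ge> 4 \<Longrightarrow> \<exists>x\<in>A. x \<notin> {p,q,r}"
proof (rule ccontr)
  assume a: "card A \<ge> 4" "\<not> (\<exists>x\<in>A. x \<notin> {p,q,r})"
  hence "A \<subseteq> {p,q,r}" by blast
  hence "card A \<le> card {p,q,r}" by (intro card_mono) auto
  also have "\<dots> \<le> 3" by (simp add: card_insert_if)
  finally show False using a by simp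
qed

lemma part2:
  assumes G: "G \<subseteq> EV V"
  and deg: "\<forall>x\<in>V. card (nb G x) \<ge> 4"
  and ncp: "\<not> contains_copy G bowtie_vertices bowtie"
  and cn: "\<forall>x\<in>V. \<forall>y\<in>V. nb G x \<inter> nb G y \<noteq> {}"
  and dv: "d \<in> nb G v" and I: "nb G v \<inter> nb G d = {w}" and U: "nb G v \<union> nb G d = V"
  and y: "y \<in> nb G v" "y \<notin> {v,d,w}"
  shows False
proof -
  have w: "w \<in> nb G v" "w \<in> nb G d" using I by auto
  have yV: "y \<in> V" and vV: "v \<in> V" and dV: "d \<in> V" using nb_mem[OF G] dv y by auto
  have wd: "w \<noteq> d" "w \<noteq> v" "d \<noteq> v" using nb_mem[OF G] w dv by auto
  obtain z where z: "z \<in> nb G y" "z \<notin> {v,d,w}" using avoid3 deg yV by meson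
  have zy: "z \<noteq> y" and zV: "z \<in> V" using nb_mem[OF G z(1)] by auto
  obtain t where t: "t \<in> nb G y" "t \<in> nb G v" using cn yV vV by blast
  have ty: "t \<noteq> y" "t \<noteq> v" using nb_mem[OF G] t by auto
  have tw: "t = w"
  proof (rule ccontr)
    assume tw: "t \<noteq> w"
    have "t \<noteq> d"
    proof
      assume "t = d"
      hence "y \<in> nb G d" using t nb_sym by metis
      thus False using I y by blast
    qed
    hence "contains_copy G bowtie_vertices bowtie"
      using tw ty wd y dv w t by (intro bowtie_intro[of v w d y t]) (auto simp: nb_def insert_commute)
    thus False using ncp by blast
  qed
  show False
  proof (cases "z \<in> nb G v")
    case True
    hence "contains_copy G bowtie_vertices bowtie"
      using z zy wd y dv w by (intro bowtie_intro[of v w d y z]) (auto simp: nb_def insert_commute)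
    thus False using ncp by blast
  next
    case False
    hence zd: "z \<in> nb G d" using U zV by blast
    obtain s where s: "s \<in> nb G z" "s \<in> nb G d" using cn zV dV by blast
    have sz: "s \<noteq> z" "s \<noteq> d" using nb_mem[OF G] s by auto
    have "s \<noteq> v" using False s nb_sym by metis
    have sw: "s = w"
    proof (rule ccontr)
      assume "s \<noteq> w"
      hence "contains_copy G bowtie_vertices bowtie"
        using \<open>s \<noteq> v\<close> sz z wd dv w s zd by (intro bowtie_intro[of d v w z s]) (auto simp: nb_def insert_commute)
      thus False using ncp by blast
    qed
    have "contains_copy G bowtie_vertices bowtie"
      using z zy wd y dv w t tw s sw zd by (intro bowtie_intro[of w v d y z]) (auto simp: nb_def insert_commute)
    thus False using ncp by blast
  qed
qed

lemma dense:
  assumes G: "G \<subseteq> EV V" and fin: "finite V" and cV: "card V = n" and n6: "n \<ge> 6"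
  and deg: "\<forall>x\<in>V. card (nb G x) \<ge> n div 2 + 1"
  shows "contains_copy G bowtie_vertices bowtie"
proof (rule ccontr)
  assume ncp: "\<not> contains_copy G bowtie_vertices bowtie"
  have deg4: "\<forall>x\<in>V. card (nb G x) \<ge> 4" using deg n6 by fastforce
  have finnb: "finite (nb G x)" for x using nb_sub[OF G] fin finite_subset by blast
  have cnc: "card (nb G x \<inter> nb G y) + n \<ge> card (nb G x) + card (nb G y)" if "x \<in> V" "y \<in> V" for x y
  proof -
    have "card (nb G x \<union> nb G y) \<le> n" using cV fin nb_sub[OF G] by (metis Diff_subset Un_subset_iff card_mono order_trans)
    thus ?thesis using card_Un_Int[OF finnb finnb, of x y] by linarith
  qed
  have cn: "\<forall>x\<in>V. \<forall>y\<in>V. nb G x \<inter> nb G y \<noteq> {}"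
  proof (intro ballI notI)
    fix x y assume xy: "x \<in> V" "y \<in> V" "nb G x \<inter> nb G y = {}"
    have "card (nb G x) \<ge> n div 2 + 1" "card (nb G y) \<ge> n div 2 + 1" using deg xy by auto
    hence "card (nb G x) + card (nb G y) \<ge> 2 * (n div 2) + 2" by linarith
    moreover have "2 * (n div 2) + 2 > n" by linarith
    ultimately show False using cnc[OF xy(1,2)] xy(3) by simp
  qed
  obtain v where vV: "v \<in> V" using cV n6 by fastforce
  obtain a where a: "a \<in> nb G v" using deg4 vV by fastforce
  have aV: "a \<in> V" using nb_mem[OF G a] by auto
  obtain b where b: "b \<in> nb G a" "b \<in> nb G v" using cn aV vV by blast
  obtain c where c: "c \<in> nb G v" "c \<notin> {a,b,v}" using avoid3 deg4 vV by meson
  have cV': "c \<in> V" using nb_mem[OF G c(1)] by auto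
  obtain x where x: "x \<in> nb G c" "x \<in> nb G v" using cn cV' vV by blast
  have ab: "a \<noteq> b" "a \<noteq> v" "b \<noteq> v" "x \<noteq> c" "x \<noteq> v" using nb_mem[OF G] a b x by auto
  have xab: "x \<in> {a,b}"
  proof (rule ccontr)
    assume "x \<notin> {a,b}"
    hence "contains_copy G bowtie_vertices bowtie"
      using a b c x ab by (intro bowtie_intro[of v a b c x]) (auto simp: nb_def insert_commute)
    thus False using ncp by blast
  qed
  obtain d where d: "d \<in> nb G v" "d \<notin> {a,b,c}" using avoid3 deg4 vV by meson
  have dV: "d \<in> V" and dv: "d \<noteq> v" using nb_mem[OF G d(1)] by auto
  have sub: "nb G v \<inter> nb G d \<subseteq> {x}"
  proof
    fix y assume y: "y \<in> nb G v \<inter> nb G d"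
    have yd: "y \<noteq> d" "y \<noteq> v" using nb_mem[OF G] y by auto
    have "y \<in> {a,b}"
    proof (rule ccontr)
      assume "y \<notin> {a,b}"
      hence "contains_copy G bowtie_vertices bowtie"
        using a b d y yd ab dv by (intro bowtie_intro[of v a b d y]) (auto simp: nb_def insert_commute)
      thus False using ncp by blast
    qed
    moreover have "y \<in> {x,c}"
    proof (rule ccontr)
      assume "y \<notin> {x,c}"
      hence "contains_copy G bowtie_vertices bowtie"
        using c d x y yd ab xab dv by (intro bowtie_intro[of v x c d y]) (auto simp: nb_def insert_commute)
      thus False using ncp by blast
    qed
    ultimately show "y \<in> {x}" using c by auto
  qed
  hence I: "nb G v \<inter> nb G d = {x}" using cn vV dV by blast
  have U: "nb G v \<union> nb G d = V"
  proof (rule card_subset_eq[OF fin])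
    show "nb G v \<union> nb G d \<subseteq> V" using nb_sub[OF G] by blast
    have "card (nb G v \<union> nb G d) + 1 = card (nb G v) + card (nb G d)"
      using card_Un_Int[OF finnb finnb, of v d] I by simp
    moreover have "card (nb G v) \<ge> n div 2 + 1" "card (nb G d) \<ge> n div 2 + 1" using deg vV dV by auto
    ultimately have "card (nb G v \<union> nb G d) \<ge> n" by linarith
    moreover have "card (nb G v \<union> nb G d) \<le> card V" using \<open>nb G v \<union> nb G d \<subseteq> V\<close> fin card_mono by blast
    ultimately show "card (nb G v \<union> nb G d) = card V" using cV by linarith
  qed
  have "card V \<ge> 4" using cV n6 by simp
  then obtain y where y: "y \<in> V" "y \<notin> {v,d,x}" using avoid3 by meson
  show False
  proof (cases "y \<in> nb G v")
    case True
    show False by (rule part2[OF G deg4 ncp cn d(1) I U True y(2)])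
  next
    case False
    hence "y \<in> nb G d" using U y by blast
    moreover have "v \<in> nb G d" using d(1) nb_sym by metis
    moreover have "nb G d \<inter> nb G v = {x}" using I by blast
    moreover have "nb G d \<union> nb G v = V" using U by blast
    ultimately show False using part2[OF G deg4 ncp cn] y by blast
  qed
qed

lemma avoid: "finite B \<Longrightarrow> card B < card A \<Longrightarrow> \<exists>x\<in>A. x \<notin> B"
  by (meson card_mono not_le subsetI)

lemma copy_mono: "G' \<subseteq> G \<Longrightarrow> contains_copy G' VF F \<Longrightarrow> contains_copy G VF F"
  unfolding contains_copy_def by blast

lemma arith_step: "Suc n * Suc n div 4 = n * n div 4 + Suc n div 2"
proof (cases "even n")
  case True
  then obtain k where "n = 2 * k" by blast
  thus ?thesis by (simp add: algebra_simps)
next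
  case False
  then obtain k where "n = 2 * k + 1" using oddE by blast
  moreover have "(4 + k * 8 + k * k * 4) div 4 = 1 + 2 * k + k * k" by simp
  ultimately show ?thesis by (simp add: algebra_simps)
qed

lemma base5:
  assumes fin: "finite V" and cV: "card V = 5" and G: "G \<subseteq> EV V" and cG: "card G \<ge> 8"
  shows "contains_copy G bowtie_vertices bowtie"
proof (rule ccontr)
  assume ncp: "\<not> contains_copy G bowtie_vertices bowtie"
  have cE: "card (EV V) = 10" unfolding EV_alt using n_subsets[OF fin, of 2] cV by (simp add: choose_two)
  define M where "M = EV V - G"
  have finM: "finite M" unfolding M_def using finite_EV[OF fin] by simp
  have cM: "card M \<le> 2" unfolding M_def using card_Diff_subset[OF finite_subset[OF G finite_EV[OF fin]] G] cE cG by simp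
  have "card (\<Union>M) \<le> sum card M" by (rule card_Union_le_sum_card)
  also have "sum card M = sum (\<lambda>_. 2) M" by (rule sum.cong) (auto simp: M_def EV_alt)
  also have "\<dots> \<le> 4" using cM by simp
  finally have cU: "card (\<Union>M) \<le> 4" .
  have finU: "finite (\<Union>M)" using finM M_def EV_alt by (auto intro: finite_subset[OF _ fin])
  have "card (\<Union>M) < card V" using cU cV by simp
  then obtain c where c: "c \<in> V" "c \<notin> \<Union>M" using avoid[OF finU] by blast
  have cu: "{c,u} \<in> G" if "u \<in> V" "u \<noteq> c" for u
  proof -
    have "{c,u} \<in> EV V" using that c EV_mem by blast
    moreover have "{c,u} \<notin> M" using c by blast
    ultimately show ?thesis unfolding M_def by blast
  qed
  have cb: "card {c} < card V" using cV by simp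
  obtain p where p: "p \<in> V" "p \<notin> {c}" using avoid[OF _ cb] by blast
  have cb: "card {c,p} < card V" using cV by (simp add: card_insert_if)
  obtain q where q: "q \<in> V" "q \<notin> {c,p}" using avoid[OF _ cb] by blast
  have cb: "card {c,p,q} < card V" using cV by (simp add: card_insert_if)
  obtain r where r: "r \<in> V" "r \<notin> {c,p,q}" using avoid[OF _ cb] by blast
  have cb: "card {c,p,q,r} < card V" using cV by (simp add: card_insert_if)
  obtain s where s: "s \<in> V" "s \<notin> {c,p,q,r}" using avoid[OF _ cb] by blast
  have g: "\<And>x y. x \<in> V \<Longrightarrow> y \<in> V \<Longrightarrow> x \<noteq> y \<Longrightarrow> {x,y} \<in> G \<or> {x,y} \<in> M"
    unfolding M_def using EV_mem by blast
  have m1: "{p,q} \<in> M \<or> {r,s} \<in> M"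
  proof (rule ccontr)
    assume "\<not> ?thesis"
    hence "{p,q} \<in> G" "{r,s} \<in> G" using g p q r s by auto
    hence "contains_copy G bowtie_vertices bowtie"
      using p q r s cu by (intro bowtie_intro[of c p q r s]) auto
    thus False using ncp by blast
  qed
  have m2: "{p,r} \<in> M \<or> {q,s} \<in> M"
  proof (rule ccontr)
    assume "\<not> ?thesis"
    hence "{p,r} \<in> G" "{q,s} \<in> G" using g p q r s by auto
    hence "contains_copy G bowtie_vertices bowtie"
      using p q r s cu by (intro bowtie_intro[of c p r q s]) auto
    thus False using ncp by blast
  qed
  have m3: "{p,s} \<in> M \<or> {q,r} \<in> M"
  proof (rule ccontr)
    assume "\<not> ?thesis"
    hence "{p,s} \<in> G" "{q,r} \<in> G" using g p q r s by auto
    hence "contains_copy G bowtie_vertices bowtie"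
      using p q r s cu by (intro bowtie_intro[of c p s q r]) auto
    thus False using ncp by blast
  qed
  obtain e1 e2 e3 where e: "e1 \<in> M" "e2 \<in> M" "e3 \<in> M" "e1 \<in> {{p,q},{r,s}}" "e2 \<in> {{p,r},{q,s}}" "e3 \<in> {{p,s},{q,r}}"
    using m1 m2 m3 by blast
  have "e1 \<noteq> e2" "e1 \<noteq> e3" "e2 \<noteq> e3" using e(4-6) p q r s by (auto simp: doubleton_eq_iff)
  hence "card {e1,e2,e3} = 3" by simp
  moreover have "card {e1,e2,e3} \<le> card M" using e(1-3) finM by (intro card_mono) auto
  ultimately show False using cM by simp
qed

lemma turan_ind:
  assumes "n \<ge> 5"
  shows "\<forall>V G. finite V \<longrightarrow> card V = n \<longrightarrow> G \<subseteq> EV V \<longrightarrow> card G \<ge> n * n div 4 + 2 \<longrightarrow>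
     contains_copy G bowtie_vertices bowtie"
  using assms
proof (induction n rule: nat_induct_at_least)
  case base
  then show ?case using base5 by simp
next
  case (Suc n)
  show ?case
  proof (intro allI impI)
    fix V G assume fin: "finite V" and cV: "card V = Suc n" and G: "G \<subseteq> EV V"
      and cG: "card G \<ge> Suc n * Suc n div 4 + 2"
    show "contains_copy G bowtie_vertices bowtie"
    proof (cases "\<forall>x\<in>V. card (nb G x) \<ge> Suc n div 2 + 1")
      case True
      show ?thesis by (rule dense[OF G fin cV _ True]) (use Suc in simp)
    next
      case False
      then obtain v where v: "v \<in> V" "card (nb G v) \<le> Suc n div 2" by force
      define G' where "G' = {e \<in> G. v \<notin> e}"
      define Gv where "Gv = {e \<in> G. v \<in> e}"
      have finnb: "finite (nb G v)" using nb_sub[OF G] fin finite_subset by blast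
      have "Gv \<subseteq> (\<lambda>u. {u,v}) ` nb G v"
      proof
        fix e assume e: "e \<in> Gv"
        then obtain x y where xy: "e = {x,y}" using G EV_elem unfolding Gv_def by blast
        show "e \<in> (\<lambda>u. {u,v}) ` nb G v"
        proof (cases "x = v")
          case True
          thus ?thesis using e xy unfolding Gv_def nb_def by (auto simp: insert_commute)
        next
          case False
          hence "y = v" using e xy unfolding Gv_def by auto
          thus ?thesis using e xy unfolding Gv_def nb_def by auto
        qed
      qed
      hence cGv: "card Gv \<le> card (nb G v)" by (meson card_image_le finnb card_mono finite_imageI order_trans)
      have finG: "finite G" using finite_subset[OF G finite_EV[OF fin]] .
      have "G = G' \<union> Gv" unfolding G'_def Gv_def by blast
      hence "card G \<le> card G' + card Gv" by (metis card_Un_le)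
      hence cG': "card G' \<ge> n * n div 4 + 2" using cG cGv v(2) arith_step[of n] by linarith
      have G'sub: "G' \<subseteq> EV (V - {v})"
      proof
        fix e assume e: "e \<in> G'"
        then obtain x y where "e = {x,y}" "x \<in> V" "y \<in> V" "x \<noteq> y" using G EV_elem unfolding G'_def by blast
        thus "e \<in> EV (V - {v})" using e EV_mem unfolding G'_def by auto
      qed
      have "contains_copy G' bowtie_vertices bowtie"
        using Suc.IH fin cV v(1) G'sub cG' by (metis card_Diff_singleton diff_Suc_1 finite_Diff)
      thus ?thesis by (rule copy_mono[rotated]) (auto simp: G'_def)
    qed
  qed
qed



definition adj :: "nat \<Rightarrow> nat \<Rightarrow> nat \<Rightarrow> nat \<Rightarrow> bool" where
  "adj m n x y \<longleftrightarrow> (x < m \<and> m \<le> y \<and> y < n) \<or> (y < m \<and> m \<le> x \<and> x < n) \<or>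
     (x = 0 \<and> y = 1) \<or> (x = 1 \<and> y = 0) \<or> (x = 1 \<and> y = 2) \<or> (x = 2 \<and> y = 1)"

definition G0 :: "nat \<Rightarrow> nat \<Rightarrow> nat set set" where
  "G0 m n = {{x,y}|x y. adj m n x y}"

definition PP :: "nat \<Rightarrow> nat \<Rightarrow> (nat \<times> nat) set" where
  "PP m n = {..<m} \<times> {m..<n}"

definition RR :: "nat \<Rightarrow> nat \<Rightarrow> (nat \<times> nat) set \<Rightarrow> (nat \<times> nat) set \<Rightarrow> (nat \<times> nat) set" where
  "RR m n I S = I \<union> S \<union> (\<lambda>(a,b). (b,a)) ` (PP m n - S)"

lemma adj_sym: "adj m n x y \<longleftrightarrow> adj m n y x"
  unfolding adj_def by auto

lemma G0_mem: "{u,v} \<in> G0 m n \<longleftrightarrow> adj m n u v"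
  unfolding G0_def using adj_sym by (auto simp: doubleton_eq_iff)

lemma G0_sub: assumes "m \<ge> 3" "m \<le> n" shows "G0 m n \<subseteq> all_edges n"
proof
  fix e assume "e \<in> G0 m n"
  then obtain x y where e: "e = {x,y}" "adj m n x y" unfolding G0_def by blast
  hence "x < n" "y < n" "x \<noteq> y" using assms unfolding adj_def by auto
  thus "e \<in> all_edges n" using e unfolding all_edges_def by blast
qed

lemma RR_mem: "(x,y) \<in> RR m n I S \<longleftrightarrow> (x,y) \<in> I \<or> (x,y) \<in> S \<or> ((y,x) \<in> PP m n \<and> (y,x) \<notin> S)"
  unfolding RR_def by force

lemma PP_mem: "(x,y) \<in> PP m n \<longleftrightarrow> x < m \<and> m \<le> y \<and> y < n"
  unfolding PP_def by auto

lemma RR_orient: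
  assumes m: "m \<ge> 3" and I: "I \<in> {{(1,0),(1,2)}, {(0,1),(2,1)}, {(0,1),(1,2)}}" and S: "S \<subseteq> PP m n"
  shows "is_orientation (G0 m n) (RR m n I S)"
proof -
  have Ssub: "(x,y) \<in> S \<Longrightarrow> x < m \<and> m \<le> y \<and> y < n" for x y using S PP_mem by blast
  have Isub: "(x,y) \<in> I \<Longrightarrow> (x = 0 \<and> y = 1) \<or> (x = 1 \<and> y = 0) \<or> (x = 1 \<and> y = 2) \<or> (x = 2 \<and> y = 1)" for x y
    using I by (elim insertE emptyE) auto
  have Iin: "((0,1) \<in> I \<longleftrightarrow> (1,0) \<notin> I) \<and> ((1,2) \<in> I \<longleftrightarrow> (2,1) \<notin> I)" using I by (elim insertE emptyE) simp_all
  show ?thesis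
    unfolding is_orientation_def
  proof (intro conjI allI impI ballI)
    fix p assume "p \<in> RR m n I S"
    then obtain u v where p: "p = (u,v)" "(u,v) \<in> RR m n I S" by (cases p) auto
    hence "adj m n u v" using Isub[of u v] Ssub[of u v] m unfolding RR_mem PP_mem adj_def by auto
    thus "case p of (u, v) \<Rightarrow> {u, v} \<in> G0 m n" using p G0_mem by simp
  next
    fix u v assume "{u,v} \<in> G0 m n"
    hence a: "adj m n u v" using G0_mem by simp
    show "(u, v) \<in> RR m n I S \<longleftrightarrow> (v, u) \<notin> RR m n I S"
    proof (cases "(u < m \<and> m \<le> v \<and> v < n) \<or> (v < m \<and> m \<le> u \<and> u < n)")
      case True
      hence "(u,v) \<notin> I" "(v,u) \<notin> I" using Isub[of u v] Isub[of v u] m by auto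
      moreover have "\<not> (v < m \<and> m \<le> u) \<or> \<not> (u < m \<and> m \<le> v)" by auto
      ultimately show ?thesis using True Ssub[of u v] Ssub[of v u] unfolding RR_mem PP_mem by blast
    next
      case False
      hence uv: "(u = 0 \<and> v = 1) \<or> (u = 1 \<and> v = 0) \<or> (u = 1 \<and> v = 2) \<or> (u = 2 \<and> v = 1)"
        using a unfolding adj_def by auto
      hence "(u,v) \<notin> S" "(v,u) \<notin> S" "(u,v) \<notin> PP m n" "(v,u) \<notin> PP m n"
        using Ssub[of u v] Ssub[of v u] m PP_mem by auto
      thus ?thesis using uv Iin unfolding RR_mem by auto
    qed
  qed
qed

lemma triangle:
  assumes m: "m \<ge> 3" and "adj m n x y" "adj m n y z" "adj m n x z" "x \<noteq> y" "y \<noteq> z" "x \<noteq> z"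
  shows "(x = 1 \<and> ((y \<in> {0,2} \<and> m \<le> z \<and> z < n) \<or> (z \<in> {0,2} \<and> m \<le> y \<and> y < n))) \<or>
         (y = 1 \<and> ((x \<in> {0,2} \<and> m \<le> z \<and> z < n) \<or> (z \<in> {0,2} \<and> m \<le> x \<and> x < n))) \<or>
         (z = 1 \<and> ((x \<in> {0,2} \<and> m \<le> y \<and> y < n) \<or> (y \<in> {0,2} \<and> m \<le> x \<and> x < n)))"
  using assms unfolding adj_def by (elim disjE conjE) simp_all

lemma tri1:
  assumes m: "m \<ge> 3" and "adj m n x y" "adj m n y z" "adj m n x z" "x \<noteq> y" "y \<noteq> z" "x \<noteq> z"
  shows "x = 1 \<or> y = 1 \<or> z = 1"
  using triangle[OF assms] by blast

lemma tri2:
  assumes m: "m \<ge> 3" and "adj m n x y" "adj m n y z" "adj m n x z" "x \<noteq> y" "y \<noteq> z" "x \<noteq> z" "x = 1"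
  shows "(y \<in> {0,2} \<and> m \<le> z \<and> z < n) \<or> (z \<in> {0,2} \<and> m \<le> y \<and> y < n)"
  using triangle[OF assms(1-7)] assms(5,7,8) by blast

lemma copy_struct:
  assumes m: "m \<ge> 3" and orR: "is_orientation (G0 m n) R" and oH: "is_orientation bowtie H"
  and inj: "inj_on f bowtie_vertices" and arcs: "\<forall>(a,b)\<in>H. (f a, f b) \<in> R"
  shows "f 0 = 1 \<and> ((f 1 \<in> {0,2} \<and> m \<le> f 2 \<and> f 2 < n) \<or> (f 2 \<in> {0,2} \<and> m \<le> f 1 \<and> f 1 < n)) \<and>
         ((f 3 \<in> {0,2} \<and> m \<le> f 4 \<and> f 4 < n) \<or> (f 4 \<in> {0,2} \<and> m \<le> f 3 \<and> f 3 < n))"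
proof -
  have edge: "adj m n (f a) (f b)" if ab: "{a,b} \<in> bowtie" for a b
  proof (cases "(a,b) \<in> H")
    case True
    hence "(f a, f b) \<in> R" using arcs by blast
    hence "{f a, f b} \<in> G0 m n" using orR unfolding is_orientation_def by blast
    thus ?thesis using G0_mem by blast
  next
    case False
    hence "(b,a) \<in> H" using oH ab unfolding is_orientation_def by blast
    hence "(f b, f a) \<in> R" using arcs by blast
    hence "{f b, f a} \<in> G0 m n" using orR unfolding is_orientation_def by blast
    thus ?thesis using G0_mem adj_sym by blast
  qed
  have e1: "adj m n (f 0) (f 1)" by (rule edge) (simp add: bowtie_def)
  have e2: "adj m n (f 1) (f 2)" by (rule edge) (simp add: bowtie_def)
  have e3: "adj m n (f 0) (f 2)" by (rule edge) (simp add: bowtie_def)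
  have e4: "adj m n (f 0) (f 3)" by (rule edge) (simp add: bowtie_def)
  have e5: "adj m n (f 3) (f 4)" by (rule edge) (simp add: bowtie_def)
  have e6: "adj m n (f 0) (f 4)" by (rule edge) (simp add: bowtie_def)
  have d: "f i \<noteq> f j" if "i \<in> bowtie_vertices" "j \<in> bowtie_vertices" "i \<noteq> j" for i j
    using inj that unfolding inj_on_def by blast
  have d01: "f 0 \<noteq> f 1" by (rule d) (simp_all add: bowtie_vertices_def)
  have d02: "f 0 \<noteq> f 2" by (rule d) (simp_all add: bowtie_vertices_def)
  have d12: "f 1 \<noteq> f 2" by (rule d) (simp_all add: bowtie_vertices_def)
  have d03: "f 0 \<noteq> f 3" by (rule d) (simp_all add: bowtie_vertices_def)
  have d04: "f 0 \<noteq> f 4" by (rule d) (simp_all add: bowtie_vertices_def)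
  have d34: "f 3 \<noteq> f 4" by (rule d) (simp_all add: bowtie_vertices_def)
  have d13: "f 1 \<noteq> f 3" by (rule d) (simp_all add: bowtie_vertices_def)
  have d14: "f 1 \<noteq> f 4" by (rule d) (simp_all add: bowtie_vertices_def)
  have d23: "f 2 \<noteq> f 3" by (rule d) (simp_all add: bowtie_vertices_def)
  have d24: "f 2 \<noteq> f 4" by (rule d) (simp_all add: bowtie_vertices_def)
  have t1: "f 0 = 1 \<or> f 1 = 1 \<or> f 2 = 1" by (rule tri1[OF m e1 e2 e3 d01 d12 d02])
  have t2: "f 0 = 1 \<or> f 3 = 1 \<or> f 4 = 1" by (rule tri1[OF m e4 e5 e6 d03 d34 d04])
  have f0: "f 0 = 1" using t1 t2 d13 d14 d23 d24 by metis
  show ?thesis using tri2[OF m e1 e2 e3 d01 d12 d02 f0] tri2[OF m e4 e5 e6 d03 d34 d04 f0] f0 by blast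
qed

lemma Ssub: "S \<subseteq> PP m n \<Longrightarrow> (x,y) \<in> S \<Longrightarrow> x < m \<and> m \<le> y \<and> y < n"
  using PP_mem by blast

lemma RR_small: assumes "m \<ge> 3" "S \<subseteq> PP m n" "x \<le> 2" "y \<le> 2"
  shows "(x,y) \<in> RR m n I S \<longleftrightarrow> (x,y) \<in> I"
proof -
  have "(x,y) \<notin> S" using Ssub[OF assms(2), of x y] assms by linarith
  moreover have "(y,x) \<notin> PP m n" using PP_mem[of y x m n] assms by linarith
  ultimately show ?thesis unfolding RR_mem by blast
qed

lemma I_cases: "(I::(nat\<times>nat) set) \<in> {{(1,0),(1,2)}, {(0,1),(2,1)}, {(0,1),(1,2)}} \<Longrightarrow> (x,y) \<in> I \<Longrightarrow> x \<le> 2 \<and> y \<le> 2"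
  by (elim insertE emptyE) auto

lemma RR_B1: assumes "m \<ge> 3" "S \<subseteq> PP m n" "m \<le> b" "b < n" "I \<in> {{(1,0),(1,2)}, {(0,1),(2,1)}, {(0,1),(1,2)}}"
  shows "(b,1) \<in> RR m n I S \<longleftrightarrow> (1,b) \<notin> S"
proof -
  have "(b,1) \<notin> I" using I_cases[OF assms(5), of b 1] assms by linarith
  moreover have "(b,1) \<notin> S" using Ssub[OF assms(2), of b 1] assms by linarith
  moreover have "(1,b) \<in> PP m n" using PP_mem[of 1 b m n] assms by linarith
  ultimately show ?thesis unfolding RR_mem by blast
qed

lemma RR_1B: assumes "m \<ge> 3" "S \<subseteq> PP m n" "m \<le> b" "b < n" "I \<in> {{(1,0),(1,2)}, {(0,1),(2,1)}, {(0,1),(1,2)}}"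
  shows "(1,b) \<in> RR m n I S \<longleftrightarrow> (1,b) \<in> S"
proof -
  have "(1,b) \<notin> I" using I_cases[OF assms(5), of 1 b] assms by linarith
  moreover have "(b,1) \<notin> PP m n" using PP_mem[of b 1 m n] assms by linarith
  ultimately show ?thesis unfolding RR_mem by blast
qed

definition IV :: "(nat \<times> nat) set set" where
  "IV = {{(1,0),(1,2)}, {(0,1),(2,1)}, {(0,1),(1,2)}}"

lemma two_pairs:
  assumes p1: "(f 1 \<in> {0,2} \<and> m \<le> f 2 \<and> f 2 < n) \<or> (f 2 \<in> {0,2} \<and> m \<le> f 1 \<and> f 1 < n)"
  and p2: "(f 3 \<in> {0,2} \<and> m \<le> f 4 \<and> f 4 < n) \<or> (f 4 \<in> {0,2} \<and> m \<le> f 3 \<and> f 3 < n)"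
  and d: "f 1 \<noteq> f 3" "f 1 \<noteq> f 4" "f 2 \<noteq> f (3::nat)" "f 2 \<noteq> f (4::nat)"
  and P: "P1 (f 1)" "P1 (f 2)" "P2 (f 3)" "P2 (f 4)"
  shows "\<exists>x y b c. ((x = 0 \<and> y = 2) \<or> (x = 2 \<and> y = (0::nat))) \<and> m \<le> b \<and> b < n \<and> m \<le> c \<and> c < n \<and>
     P1 x \<and> P1 b \<and> P2 y \<and> P2 c"
proof -
  obtain x b where xb: "x \<in> {0,2}" "m \<le> b" "b < n" "P1 x" "P1 b" "x = f 1 \<or> x = f 2" using p1 P by blast
  obtain y c where yc: "y \<in> {0,2}" "m \<le> c" "c < n" "P2 y" "P2 c" "y = f 3 \<or> y = f 4" using p2 P by blast
  have "x \<noteq> y" using xb(6) yc(6) d by blast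
  hence "(x = 0 \<and> y = 2) \<or> (x = 2 \<and> y = 0)" using xb(1) yc(1) by blast
  thus ?thesis using xb yc by blast
qed

lemma extract_copy:
  assumes m: "m \<ge> 3" and I: "I \<in> IV" and S: "S \<subseteq> PP m n" and oH: "is_orientation bowtie H"
  and cp: "contains_dicopy (RR m n I S) bowtie_vertices H"
  shows "\<exists>f. f 0 = 1 \<and> (\<forall>(a,b)\<in>H. (f a, f b) \<in> RR m n I S) \<and>
    (\<forall>P1 P2. P1 (f 1) \<and> P1 (f 2) \<and> P2 (f 3) \<and> P2 (f 4) \<longrightarrow>
      (\<exists>x y b c. ((x = 0 \<and> y = 2) \<or> (x = 2 \<and> y = (0::nat))) \<and> m \<le> b \<and> b < n \<and> m \<le> c \<and> c < n \<and>
        P1 x \<and> P1 b \<and> P2 y \<and> P2 c))"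
proof -
  obtain f where inj: "inj_on f bowtie_vertices" and arcs: "\<forall>(a,b)\<in>H. (f a, f b) \<in> RR m n I S"
    using cp unfolding contains_dicopy_def by blast
  have orR: "is_orientation (G0 m n) (RR m n I S)" using RR_orient[OF m _ S] I unfolding IV_def by blast
  note cs = copy_struct[OF m orR oH inj arcs]
  have d: "f i \<noteq> f j" if "i \<in> bowtie_vertices" "j \<in> bowtie_vertices" "i \<noteq> j" for i j
    using inj that unfolding inj_on_def by blast
  have d13: "f 1 \<noteq> f 3" by (rule d) (simp_all add: bowtie_vertices_def)
  have d14: "f 1 \<noteq> f 4" by (rule d) (simp_all add: bowtie_vertices_def)
  have d23: "f 2 \<noteq> f 3" by (rule d) (simp_all add: bowtie_vertices_def)
  have d24: "f 2 \<noteq> f 4" by (rule d) (simp_all add: bowtie_vertices_def)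
  have ex: "\<forall>P1 P2. P1 (f 1) \<and> P1 (f 2) \<and> P2 (f 3) \<and> P2 (f 4) \<longrightarrow>
      (\<exists>x y b c. ((x = 0 \<and> y = 2) \<or> (x = 2 \<and> y = (0::nat))) \<and> m \<le> b \<and> b < n \<and> m \<le> c \<and> c < n \<and>
        P1 x \<and> P1 b \<and> P2 y \<and> P2 c)"
  proof (intro allI impI)
    fix P1 P2 :: "nat \<Rightarrow> bool"
    assume P: "P1 (f 1) \<and> P1 (f 2) \<and> P2 (f 3) \<and> P2 (f 4)"
    have p1: "(f 1 \<in> {0,2} \<and> m \<le> f 2 \<and> f 2 < n) \<or> (f 2 \<in> {0,2} \<and> m \<le> f 1 \<and> f 1 < n)"
      and p2: "(f 3 \<in> {0,2} \<and> m \<le> f 4 \<and> f 4 < n) \<or> (f 4 \<in> {0,2} \<and> m \<le> f 3 \<and> f 3 < n)"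
      using cs by blast+
    show "\<exists>x y b c. ((x = 0 \<and> y = 2) \<or> (x = 2 \<and> y = (0::nat))) \<and> m \<le> b \<and> b < n \<and> m \<le> c \<and> c < n \<and>
        P1 x \<and> P1 b \<and> P2 y \<and> P2 c"
      using two_pairs[OF p1 p2 d13 d14 d23 d24, of P1 P2] P by blast
  qed
  have "f 0 = 1" using cs by blast
  thus ?thesis using arcs ex by blast
qed

lemma IV_RR: "I \<in> IV \<Longrightarrow> I \<in> {{(1,0),(1,2)}, {(0,1),(2,1)}, {(0,1),(1,2)}}"
  unfolding IV_def .

lemma case_ain:
  assumes m: "m \<ge> 3" and I: "I \<in> IV" and S: "S \<subseteq> PP m n" and oH: "is_orientation bowtie H"
  and Hc: "{(1,0), (2,0), (3,0), (4,0)} \<subseteq> H"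
  and cp: "contains_dicopy (RR m n I S) bowtie_vertices H"
  shows "(0,1) \<in> I \<and> (2,1) \<in> I \<and> (\<exists>b. m \<le> b \<and> b < n \<and> (1,b) \<notin> S)"
proof -
  obtain f where f0: "f 0 = 1" and arcs: "\<forall>(a,b)\<in>H. (f a, f b) \<in> RR m n I S" and
    ex0: "\<forall>P1 P2. P1 (f 1) \<and> P1 (f 2) \<and> P2 (f 3) \<and> P2 (f 4) \<longrightarrow>
      (\<exists>x y b c. ((x = 0 \<and> y = 2) \<or> (x = 2 \<and> y = (0::nat))) \<and> m \<le> b \<and> b < n \<and> m \<le> c \<and> c < n \<and>
        P1 x \<and> P1 b \<and> P2 y \<and> P2 c)"
    using extract_copy[OF m I S oH cp] by (elim exE conjE) (rule that)
  have ex: "P1 (f 1) \<Longrightarrow> P1 (f 2) \<Longrightarrow> P2 (f 3) \<Longrightarrow> P2 (f 4) \<Longrightarrow>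
      (\<exists>x y b c. ((x = 0 \<and> y = 2) \<or> (x = 2 \<and> y = (0::nat))) \<and> m \<le> b \<and> b < n \<and> m \<le> c \<and> c < n \<and>
        P1 x \<and> P1 b \<and> P2 y \<and> P2 c)" for P1 P2
    using ex0 by blast
  let ?P = "\<lambda>x. (x,1) \<in> RR m n I S"
  have "(1,0) \<in> H" "(2,0) \<in> H" "(3,0) \<in> H" "(4,0) \<in> H" using Hc by auto
  hence "(f 1, f 0) \<in> RR m n I S" "(f 2, f 0) \<in> RR m n I S" "(f 3, f 0) \<in> RR m n I S" "(f 4, f 0) \<in> RR m n I S"
    using arcs by blast+
  hence "?P (f 1)" "?P (f 2)" "?P (f 3)" "?P (f 4)" unfolding f0 .
  then obtain x y b c where xy: "(x = 0 \<and> y = 2) \<or> (x = 2 \<and> y = (0::nat))" and bc: "m \<le> b" "b < n"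
    and P: "?P x" "?P b" "?P y" using ex[of ?P ?P] by blast
  have "x \<le> 2" "y \<le> 2" using xy by auto
  hence "(x,1) \<in> I" "(y,1) \<in> I" using P RR_small[OF m S] by auto
  moreover have "(1,b) \<notin> S" using P(2) RR_B1[OF m S bc IV_RR[OF I]] by blast
  ultimately show ?thesis using xy bc by auto
qed

lemma case_aout:
  assumes m: "m \<ge> 3" and I: "I \<in> IV" and S: "S \<subseteq> PP m n" and oH: "is_orientation bowtie H"
  and Hc: "{(0,1), (0,2), (0,3), (0,4)} \<subseteq> H"
  and cp: "contains_dicopy (RR m n I S) bowtie_vertices H"
  shows "(1,0) \<in> I \<and> (1,2) \<in> I \<and> (\<exists>b. m \<le> b \<and> b < n \<and> (1,b) \<in> S)"
proof -
  obtain f where f0: "f 0 = 1" and arcs: "\<forall>(a,b)\<in>H. (f a, f b) \<in> RR m n I S" and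
    ex0: "\<forall>P1 P2. P1 (f 1) \<and> P1 (f 2) \<and> P2 (f 3) \<and> P2 (f 4) \<longrightarrow>
      (\<exists>x y b c. ((x = 0 \<and> y = 2) \<or> (x = 2 \<and> y = (0::nat))) \<and> m \<le> b \<and> b < n \<and> m \<le> c \<and> c < n \<and>
        P1 x \<and> P1 b \<and> P2 y \<and> P2 c)"
    using extract_copy[OF m I S oH cp] by (elim exE conjE) (rule that)
  have ex: "P1 (f 1) \<Longrightarrow> P1 (f 2) \<Longrightarrow> P2 (f 3) \<Longrightarrow> P2 (f 4) \<Longrightarrow>
      (\<exists>x y b c. ((x = 0 \<and> y = 2) \<or> (x = 2 \<and> y = (0::nat))) \<and> m \<le> b \<and> b < n \<and> m \<le> c \<and> c < n \<and>
        P1 x \<and> P1 b \<and> P2 y \<and> P2 c)" for P1 P2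
    using ex0 by blast
  let ?P = "\<lambda>x. (1,x) \<in> RR m n I S"
  have "(0,1) \<in> H" "(0,2) \<in> H" "(0,3) \<in> H" "(0,4) \<in> H" using Hc by auto
  hence "(f 0, f 1) \<in> RR m n I S" "(f 0, f 2) \<in> RR m n I S" "(f 0, f 3) \<in> RR m n I S" "(f 0, f 4) \<in> RR m n I S"
    using arcs by blast+
  hence "?P (f 1)" "?P (f 2)" "?P (f 3)" "?P (f 4)" unfolding f0 .
  then obtain x y b c where xy: "(x = 0 \<and> y = 2) \<or> (x = 2 \<and> y = (0::nat))" and bc: "m \<le> b" "b < n"
    and P: "?P x" "?P b" "?P y" using ex[of ?P ?P] by blast
  have "x \<le> 2" "y \<le> 2" using xy by auto
  hence "(1,x) \<in> I" "(1,y) \<in> I" using P RR_small[OF m S] by auto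
  moreover have "(1,b) \<in> S" using P(2) RR_1B[OF m S bc IV_RR[OF I]] by blast
  ultimately show ?thesis using xy bc by auto
qed

lemma case_b:
  assumes m: "m \<ge> 3" and I: "I \<in> IV" and S: "S \<subseteq> PP m n" and oH: "is_orientation bowtie H"
  and Hc: "{(1,0), (2,0), (0,3), (0,4)} \<subseteq> H \<or> {(0,1), (0,2), (3,0), (4,0)} \<subseteq> H"
  and cp: "contains_dicopy (RR m n I S) bowtie_vertices H"
  shows "(\<exists>x y. ((x = 0 \<and> y = 2) \<or> (x = 2 \<and> y = (0::nat))) \<and> (x,1) \<in> I \<and> (1,y) \<in> I) \<and>
    (\<exists>b. m \<le> b \<and> b < n \<and> (1,b) \<in> S)"
proof -
  obtain f where f0: "f 0 = 1" and arcs: "\<forall>(a,b)\<in>H. (f a, f b) \<in> RR m n I S" and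
    ex0: "\<forall>P1 P2. P1 (f 1) \<and> P1 (f 2) \<and> P2 (f 3) \<and> P2 (f 4) \<longrightarrow>
      (\<exists>x y b c. ((x = 0 \<and> y = 2) \<or> (x = 2 \<and> y = (0::nat))) \<and> m \<le> b \<and> b < n \<and> m \<le> c \<and> c < n \<and>
        P1 x \<and> P1 b \<and> P2 y \<and> P2 c)"
    using extract_copy[OF m I S oH cp] by (elim exE conjE) (rule that)
  have ex: "P1 (f 1) \<Longrightarrow> P1 (f 2) \<Longrightarrow> P2 (f 3) \<Longrightarrow> P2 (f 4) \<Longrightarrow>
      (\<exists>x y b c. ((x = 0 \<and> y = 2) \<or> (x = 2 \<and> y = (0::nat))) \<and> m \<le> b \<and> b < n \<and> m \<le> c \<and> c < n \<and>
        P1 x \<and> P1 b \<and> P2 y \<and> P2 c)" for P1 P2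
    using ex0 by blast
  let ?Pi = "\<lambda>x. (x,1) \<in> RR m n I S"
  let ?Po = "\<lambda>x. (1,x) \<in> RR m n I S"
  from Hc show ?thesis
  proof
    assume Hc: "{(1,0), (2,0), (0,3), (0,4)} \<subseteq> H"
    have "(1,0) \<in> H" "(2,0) \<in> H" "(0,3) \<in> H" "(0,4) \<in> H" using Hc by auto
    hence "(f 1, f 0) \<in> RR m n I S" "(f 2, f 0) \<in> RR m n I S" "(f 0, f 3) \<in> RR m n I S" "(f 0, f 4) \<in> RR m n I S"
      using arcs by blast+
    hence "?Pi (f 1)" "?Pi (f 2)" "?Po (f 3)" "?Po (f 4)" unfolding f0 .
    then obtain x y b c where xy: "(x = 0 \<and> y = 2) \<or> (x = 2 \<and> y = (0::nat))" and bc: "m \<le> c" "c < n"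
      and P: "?Pi x" "?Po y" "?Po c" using ex[of ?Pi ?Po] by blast
    have "x \<le> 2" "y \<le> 2" using xy by auto
    hence "(x,1) \<in> I" "(1,y) \<in> I" using P RR_small[OF m S] by auto
    moreover have "(1,c) \<in> S" using P(3) RR_1B[OF m S bc IV_RR[OF I]] by blast
    ultimately show ?thesis using xy bc by blast
  next
    assume Hc: "{(0,1), (0,2), (3,0), (4,0)} \<subseteq> H"
    have "(0,1) \<in> H" "(0,2) \<in> H" "(3,0) \<in> H" "(4,0) \<in> H" using Hc by auto
    hence "(f 0, f 1) \<in> RR m n I S" "(f 0, f 2) \<in> RR m n I S" "(f 3, f 0) \<in> RR m n I S" "(f 4, f 0) \<in> RR m n I S"
      using arcs by blast+
    hence "?Po (f 1)" "?Po (f 2)" "?Pi (f 3)" "?Pi (f 4)" unfolding f0 .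
    then obtain x y b c where xy: "(x = 0 \<and> y = 2) \<or> (x = 2 \<and> y = (0::nat))" and bc: "m \<le> b" "b < n"
      and P: "?Po x" "?Po b" "?Pi y" using ex[of ?Po ?Pi] by blast
    have "x \<le> 2" "y \<le> 2" using xy by auto
    hence "(y,1) \<in> I" "(1,x) \<in> I" using P RR_small[OF m S] by auto
    moreover have "(1,b) \<in> S" using P(2) RR_1B[OF m S bc IV_RR[OF I]] by blast
    moreover have "(y = 0 \<and> x = 2) \<or> (y = 2 \<and> x = (0::nat))" using xy by blast
    ultimately show ?thesis using bc by blast
  qed
qed

lemma RR_PP: assumes m: "m \<ge> 3" and I: "I \<in> IV" and S: "S \<subseteq> PP m n"
  shows "RR m n I S \<inter> PP m n = S"
proof
  show "S \<subseteq> RR m n I S \<inter> PP m n" using S unfolding RR_def by blast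
  show "RR m n I S \<inter> PP m n \<subseteq> S"
  proof
    fix p assume p: "p \<in> RR m n I S \<inter> PP m n"
    obtain x y where xy: "p = (x,y)" by (cases p)
    have xy': "x < m" "m \<le> y" "y < n" using p xy PP_mem by auto
    have "(x,y) \<notin> I" using I_cases[OF IV_RR[OF I], of x y] xy' m by linarith
    moreover have "(y,x) \<notin> PP m n" using PP_mem[of y x m n] xy' by linarith
    moreover have "(x,y) \<in> RR m n I S" using p xy by simp
    ultimately show "p \<in> S" using xy unfolding RR_mem by blast
  qed
qed

lemma RR_Q: assumes m: "m \<ge> 3" and I: "I \<in> IV" and S: "S \<subseteq> PP m n"
  shows "RR m n I S \<inter> {(x,y). x \<le> 2 \<and> y \<le> 2} = I"
proof
  show "I \<subseteq> RR m n I S \<inter> {(x,y). x \<le> 2 \<and> y \<le> 2}"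
    using I_cases[OF IV_RR[OF I]] unfolding RR_def by auto
  show "RR m n I S \<inter> {(x,y). x \<le> 2 \<and> y \<le> 2} \<subseteq> I"
    using RR_small[OF m S] by auto
qed

lemma card_PP: "card (PP m n) = m * (n - m)"
  unfolding PP_def by (simp add: card_cartesian_product)

lemma all_edges_EV: "all_edges n = EV {0..<n}"
  unfolding all_edges_def EV_def by auto

lemma D_ge:
  assumes m3: "3 \<le> m" and mn: "m \<le> n"
  and I: "I1 \<in> IV" "I2 \<in> IV" "I3 \<in> IV" and dI: "I1 \<noteq> I2" "I1 \<noteq> I3" "I2 \<noteq> I3"
  and S0: "S0 \<subseteq> PP m n"
  and free1: "\<And>S. S \<subseteq> PP m n \<Longrightarrow> \<not> contains_dicopy (RR m n I1 S) bowtie_vertices H"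
  and free2: "\<And>S. S \<subseteq> PP m n \<Longrightarrow> \<not> contains_dicopy (RR m n I2 S) bowtie_vertices H"
  and free3: "\<not> contains_dicopy (RR m n I3 S0) bowtie_vertices H"
  shows "2 * 2 ^ (m * (n - m)) + 1 \<le> D n bowtie_vertices H"
proof -
  define HF where "HF = {R. is_orientation (G0 m n) R \<and> \<not> contains_dicopy R bowtie_vertices H}"
  define F1 where "F1 = RR m n I1 ` Pow (PP m n)"
  define F2 where "F2 = RR m n I2 ` Pow (PP m n)"
  have finPP: "finite (PP m n)" unfolding PP_def by simp
  have inj: "inj_on (RR m n I) (Pow (PP m n))" if "I \<in> IV" for I
    using RR_PP[OF m3 that] unfolding inj_on_def by (metis PowD)
  have c1: "card F1 = 2 ^ (m * (n - m))" unfolding F1_def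
    using card_image[OF inj[OF I(1)]] card_Pow[of "PP m n"] card_PP finPP by simp
  have c2: "card F2 = 2 ^ (m * (n - m))" unfolding F2_def
    using card_image[OF inj[OF I(2)]] card_Pow[of "PP m n"] card_PP finPP by simp
  have neq: "RR m n I S \<noteq> RR m n I' S'" if "I \<in> IV" "I' \<in> IV" "I \<noteq> I'" "S \<subseteq> PP m n" "S' \<subseteq> PP m n"
    for I I' S S'
    using RR_Q[OF m3 that(1,4)] RR_Q[OF m3 that(2,5)] that(3) by metis
  have disj12: "F1 \<inter> F2 = {}" unfolding F1_def F2_def using neq[OF I(1,2) dI(1)] by blast
  have n3: "RR m n I3 S0 \<notin> F1 \<union> F2" unfolding F1_def F2_def using neq[OF I(1,3) dI(2) _ S0] neq[OF I(2,3) dI(3) _ S0] by blast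
  have finF: "finite F1" "finite F2" unfolding F1_def F2_def using finPP by auto
  have cF: "card (F1 \<union> F2 \<union> {RR m n I3 S0}) = 2 * 2 ^ (m * (n - m)) + 1"
    using card_Un_disjoint[OF finF disj12] c1 c2 n3 finF by (simp add: card_insert_if)
  have sub: "F1 \<union> F2 \<union> {RR m n I3 S0} \<subseteq> HF"
    unfolding HF_def F1_def F2_def using RR_orient[OF m3 IV_RR] I free1 free2 free3 S0 by auto
  have G0sub: "G0 m n \<subseteq> all_edges n" by (rule G0_sub[OF m3 mn])
  have finHF: "finite HF"
  proof (rule finite_subset[of _ "Pow ({..<n} \<times> {..<n})"])
    show "HF \<subseteq> Pow ({..<n} \<times> {..<n})"
    proof
      fix R assume "R \<in> HF"
      hence "\<forall>(u,v)\<in>R. {u,v} \<in> G0 m n" unfolding HF_def is_orientation_def by blast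
      hence "\<forall>(u,v)\<in>R. {u,v} \<in> EV {0..<n}" using G0sub all_edges_EV by blast
      thus "R \<in> Pow ({..<n} \<times> {..<n})" using EV_mem by fastforce
    qed
  qed simp
  have "2 * 2 ^ (m * (n - m)) + 1 \<le> card HF" using card_mono[OF finHF sub] cF by simp
  also have "card HF \<le> D n bowtie_vertices H"
    unfolding D_def HF_def
  proof (rule Max_ge)
    show "finite ((\<lambda>G. card {R. is_orientation G R \<and> \<not> contains_dicopy R bowtie_vertices H}) ` {G. G \<subseteq> all_edges n})"
      using finite_EV[of "{0..<n}"] all_edges_EV by simp
    show "card {R. is_orientation (G0 m n) R \<and> \<not> contains_dicopy R bowtie_vertices H}
      \<in> (\<lambda>G. card {R. is_orientation G R \<and> \<not> contains_dicopy R bowtie_vertices H}) ` {G. G \<subseteq> all_edges n}"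
      using G0sub by blast
  qed
  finally show ?thesis .
qed

lemma ex_le: assumes "n \<ge> 5" shows "ex n bowtie_vertices bowtie \<le> n * n div 4 + 1"
  unfolding ex_def
proof (rule Max.boundedI)
  show "finite (card ` {G. G \<subseteq> all_edges n \<and> \<not> contains_copy G bowtie_vertices bowtie})"
    using finite_EV[of "{0..<n}"] all_edges_EV by simp
  show "card ` {G. G \<subseteq> all_edges n \<and> \<not> contains_copy G bowtie_vertices bowtie} \<noteq> {}"
  proof -
    have "\<not> contains_copy {} bowtie_vertices bowtie" unfolding contains_copy_def bowtie_def by blast
    thus ?thesis by blast
  qed
  fix k assume "k \<in> card ` {G. G \<subseteq> all_edges n \<and> \<not> contains_copy G bowtie_vertices bowtie}"
  then obtain G where G: "G \<subseteq> EV {0..<n}" "\<not> contains_copy G bowtie_vertices bowtie" "k = card G"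
    using all_edges_EV by auto
  show "k \<le> n * n div 4 + 1"
  proof (rule ccontr)
    assume "\<not> k \<le> n * n div 4 + 1"
    hence "card G \<ge> n * n div 4 + 2" using G by simp
    moreover have "card {0..<n} = n" "finite {0..<n}" by simp_all
    ultimately show False using turan_ind[OF assms] G by blast
  qed
qed

lemma arith_m: "(n + 1) div 2 * (n - (n + 1) div 2) = n * n div (4::nat)"
proof (cases "even n")
  case True
  then obtain k where "n = 2 * k" by blast
  thus ?thesis by (simp add: algebra_simps)
next
  case False
  then obtain k where k: "n = 2 * k + 1" using oddE by blast
  have "(2 * k + 1) * (2 * k + 1) div 4 = k * k + k"
  proof -
    have "(2 * k + 1) * (2 * k + 1) = 4 * (k * k + k) + 1" by (simp add: algebra_simps)
    thus ?thesis by simp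
  qed
  moreover have "(n + 1) div 2 = k + 1" using k by simp
  ultimately show ?thesis using k by (simp add: algebra_simps)
qed

theorem mainTheorem6:
  fixes H :: "(nat \<times> nat) set"
  assumes orient: "is_orientation bowtie H"
    and cases:
      "({(1,0), (2,0), (3,0), (4,0)} \<subseteq> H \<or> {(0,1), (0,2), (0,3), (0,4)} \<subseteq> H)
       \<or> ({(1,0), (2,0), (0,3), (0,4)} \<subseteq> H \<or> {(0,1), (0,2), (3,0), (4,0)} \<subseteq> H)"
  shows "\<exists>N. \<forall>n \<ge> N. D n bowtie_vertices H > 2 ^ ex n bowtie_vertices bowtie"
proof -
  have main: "D n bowtie_vertices H > 2 ^ ex n bowtie_vertices bowtie" if n5: "n \<ge> 5" for n
  proof -
    define m where "m = (n + 1) div 2"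
    have m3: "3 \<le> m" "m \<le> n" using n5 unfolding m_def by simp_all
    have K: "m * (n - m) = n * n div 4" using arith_m[of n] unfolding m_def .
    have iv: "{(1,0),(1,2)} \<in> IV" "{(0,1),(2,1)} \<in> IV" "{(0,1),(1,2)} \<in> IV" unfolding IV_def by simp_all
    have bound: "2 * 2 ^ (m * (n - m)) + 1 \<le> D n bowtie_vertices H"
      using cases
    proof (elim disjE)
      assume Hc: "{(1,0), (2,0), (3,0), (4,0)} \<subseteq> H"
      have "m < n" using n5 unfolding m_def by simp
      hence PPne: "(1, m) \<in> PP m n" using m3 PP_mem by simp
      show ?thesis
      proof (rule D_ge[OF m3 iv(1) iv(3) iv(2) _ _ _ subset_refl])
        show "\<not> contains_dicopy (RR m n {(1,0),(1,2)} S) bowtie_vertices H" if "S \<subseteq> PP m n" for S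
          using case_ain[OF m3(1) iv(1) that orient Hc] by auto
        show "\<not> contains_dicopy (RR m n {(0,1),(1,2)} S) bowtie_vertices H" if "S \<subseteq> PP m n" for S
          using case_ain[OF m3(1) iv(3) that orient Hc] by auto
        show "\<not> contains_dicopy (RR m n {(0,1),(2,1)} (PP m n)) bowtie_vertices H"
          using case_ain[OF m3(1) iv(2) subset_refl[of "PP m n"] orient Hc] PP_mem m3 by auto
      qed (simp_all add: doubleton_eq_iff)
    next
      assume Hc: "{(0,1), (0,2), (0,3), (0,4)} \<subseteq> H"
      show ?thesis
      proof (rule D_ge[OF m3 iv(2) iv(3) iv(1) _ _ _ empty_subsetI])
        show "\<not> contains_dicopy (RR m n {(0,1),(2,1)} S) bowtie_vertices H" if "S \<subseteq> PP m n" for S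
          using case_aout[OF m3(1) iv(2) that orient Hc] by auto
        show "\<not> contains_dicopy (RR m n {(0,1),(1,2)} S) bowtie_vertices H" if "S \<subseteq> PP m n" for S
          using case_aout[OF m3(1) iv(3) that orient Hc] by auto
        show "\<not> contains_dicopy (RR m n {(1,0),(1,2)} {}) bowtie_vertices H"
          using case_aout[OF m3(1) iv(1) empty_subsetI[of "PP m n"] orient Hc] by auto
      qed (simp_all add: doubleton_eq_iff)
    next
      assume Hc0: "{(1,0), (2,0), (0,3), (0,4)} \<subseteq> H"
      hence Hc: "{(1,0), (2,0), (0,3), (0,4)} \<subseteq> H \<or> {(0,1), (0,2), (3,0), (4,0)} \<subseteq> H" by blast
      show ?thesis
      proof (rule D_ge[OF m3 iv(1) iv(2) iv(3) _ _ _ empty_subsetI])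
        show "\<not> contains_dicopy (RR m n {(1,0),(1,2)} S) bowtie_vertices H" if "S \<subseteq> PP m n" for S
          using case_b[OF m3(1) iv(1) that orient Hc] by auto
        show "\<not> contains_dicopy (RR m n {(0,1),(2,1)} S) bowtie_vertices H" if "S \<subseteq> PP m n" for S
          using case_b[OF m3(1) iv(2) that orient Hc] by auto
        show "\<not> contains_dicopy (RR m n {(0,1),(1,2)} {}) bowtie_vertices H"
          using case_b[OF m3(1) iv(3) empty_subsetI[of "PP m n"] orient Hc] by auto
      qed (simp_all add: doubleton_eq_iff)
    next
      assume Hc0: "{(0,1), (0,2), (3,0), (4,0)} \<subseteq> H"
      hence Hc: "{(1,0), (2,0), (0,3), (0,4)} \<subseteq> H \<or> {(0,1), (0,2), (3,0), (4,0)} \<subseteq> H" by blast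
      show ?thesis
      proof (rule D_ge[OF m3 iv(1) iv(2) iv(3) _ _ _ empty_subsetI])
        show "\<not> contains_dicopy (RR m n {(1,0),(1,2)} S) bowtie_vertices H" if "S \<subseteq> PP m n" for S
          using case_b[OF m3(1) iv(1) that orient Hc] by auto
        show "\<not> contains_dicopy (RR m n {(0,1),(2,1)} S) bowtie_vertices H" if "S \<subseteq> PP m n" for S
          using case_b[OF m3(1) iv(2) that orient Hc] by auto
        show "\<not> contains_dicopy (RR m n {(0,1),(1,2)} {}) bowtie_vertices H"
          using case_b[OF m3(1) iv(3) empty_subsetI[of "PP m n"] orient Hc] by auto
      qed (simp_all add: doubleton_eq_iff)
    qed
    have "ex n bowtie_vertices bowtie \<le> m * (n - m) + 1" using ex_le[OF n5] K by simp
    hence "(2::nat) ^ ex n bowtie_vertices bowtie \<le> 2 ^ (m * (n - m) + 1)" by (intro power_increasing) simp_all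
    also have "\<dots> < 2 * 2 ^ (m * (n - m)) + 1" by simp
    finally show ?thesis using bound by linarith
  qed
  show ?thesis by (intro exI[of _ 5] allI impI main)
qed

end
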